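(* Assume $F\succeq0$, and for $k\ge1$ let $X_k:=V_kT_k^{-1}V_k^*$ (with $X_0:=0$). Then for every $k\ge1$ there exists $\ell\in\mathbb C^k$ with nonzero last entry such that $X_k-X_{k-1}=V_k\ell\ell^*V_k^*$. Consequently $X_k-X_{k-1}$ has rank at most one (rank exactly one if $V_k$ has full column rank), and $X_k\succeq X_{k-1}$.
   Context: Let $A\in\mathbb C^{n\times n}$, let $C\in\mathbb C^{1\times n}$, and let $F\in\mathbb C^{n\times n}$ be Hermitian; $M^*$ denotes the conjugate transpose, $\succeq0$ denotes Hermitian positive semidefinite, and $X\succeq Y$ means $X-Y\succeq0$. Let $\alpha_1,\alpha_2,\dots\in\mathbb C$ be pairwise distinct with $\operatorname{Re}(\alpha_j)>0$ and $-A^*+\alpha_jI$ nonsingular. Set $$V_k=\big[(-A^*+\alpha_1I)^{-1}C^*,\dots,(-A^*+\alpha_kI)^{-1}C^*\big]\in\mathbb C^{n\times k},$$ and let $T_k\in\mathbb C^{k\times k}$ be the Hermitian matrix with entries $T_k(i,j)=\dfrac{1+(V_k^*FV_k)_{ij}}{\bar\alpha_i+\alpha_j}$, i.e. the unique solution of $\Lambda_k^*T+T\Lambda_k=V_k^*FV_k+\mathbf 1\mathbf 1^*$, where $\Lambda_k=\operatorname{diag}(\alpha_1,\dots,\alpha_k)$ and $\mathbf 1=[1,\dots,1]^T$. Under these assumptions $T_k$ is Hermitian positive definite and $T_{k-1}$ is its leading principal $(k-1)\times(k-1)$ submatrix. *)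

theory Defs
  imports "Jordan_Normal_Form.Schur_Decomposition" "Jordan_Normal_Form.DL_Rank"
    "Jordan_Normal_Form.Gauss_Jordan_Elimination" "HOL-Library.Complex_Order"
begin

definition minv :: "complex mat \<Rightarrow> complex mat" where
  "minv M = the (mat_inverse M)"

definition hermitian_mat :: "nat \<Rightarrow> complex mat \<Rightarrow> bool" where
  "hermitian_mat n M \<longleftrightarrow> M \<in> carrier_mat n n \<and> mat_adjoint M = M"

definition psd_mat :: "nat \<Rightarrow> complex mat \<Rightarrow> bool" where
  "psd_mat n M \<longleftrightarrow> hermitian_mat n M \<and>
     (\<forall>v \<in> carrier_vec n. 0 \<le> conjugate v \<bullet> (M *\<^sub>v v))"

text \<open>V_k: column j (0-based) is (-A^* + alpha_(j+1) I)^(-1) C^*; shifts alpha are indexed from 1.\<close>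
definition Vmat :: "nat \<Rightarrow> complex mat \<Rightarrow> complex mat \<Rightarrow> (nat \<Rightarrow> complex) \<Rightarrow> nat \<Rightarrow> complex mat" where
  "Vmat n A C \<alpha> k = mat_of_cols n
     (map (\<lambda>j. minv (- mat_adjoint A + \<alpha> (Suc j) \<cdot>\<^sub>m 1\<^sub>m n) *\<^sub>v col (mat_adjoint C) 0) [0..<k])"

definition Tmat :: "nat \<Rightarrow> complex mat \<Rightarrow> complex mat \<Rightarrow> complex mat \<Rightarrow> (nat \<Rightarrow> complex) \<Rightarrow> nat \<Rightarrow> complex mat" where
  "Tmat n A C F \<alpha> k = (let V = Vmat n A C \<alpha> k; G = mat_adjoint V * F * V in
     mat k k (\<lambda>(i,j). (1 + G $$ (i,j)) / (cnj (\<alpha> (Suc i)) + \<alpha> (Suc j))))"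

definition Xmat :: "nat \<Rightarrow> complex mat \<Rightarrow> complex mat \<Rightarrow> complex mat \<Rightarrow> (nat \<Rightarrow> complex) \<Rightarrow> nat \<Rightarrow> complex mat" where
  "Xmat n A C F \<alpha> k = (if k = 0 then 0\<^sub>m n n else
     (let V = Vmat n A C \<alpha> k in V * minv (Tmat n A C F \<alpha> k) * mat_adjoint V))"

end

theory Submission
  imports Defs
begin



definition QF :: "nat set \<Rightarrow> (nat\<Rightarrow>nat\<Rightarrow>complex) \<Rightarrow> (nat\<Rightarrow>complex) \<Rightarrow> complex" where
  "QF I G v = (\<Sum>i\<in>I. \<Sum>j\<in>I. cnj (v i) * v j * G i j)"

definition CG :: "(nat \<Rightarrow> complex) \<Rightarrow> (nat\<Rightarrow>nat\<Rightarrow>complex) \<Rightarrow> nat\<Rightarrow>nat\<Rightarrow>complex" where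
  "CG \<beta> G i j = G i j / (cnj (\<beta> i) + \<beta> j)"

lemma re_pos_nz: "Re x > 0 \<Longrightarrow> Re y > 0 \<Longrightarrow> cnj x + y \<noteq> 0"
proof
  assume "Re x > 0" "Re y > 0" "cnj x + y = 0"
  then have "Re (cnj x + y) = 0" by simp
  with \<open>Re x > 0\<close> \<open>Re y > 0\<close> show False by simp
qed

lemma key_id:
  fixes x y c cc :: complex
  assumes a1: "x + c \<noteq> 0" and a2: "cc + y \<noteq> 0" and a3: "x + y \<noteq> 0"
  shows "1/(x+y) = (c+cc)/((x+c)*(cc+y)) + (x-cc)*(y-c)/((x+c)*(cc+y)*(x+y))"
proof -
  have e: "(x+c)*(cc+y) = (c+cc)*(x+y) + (x-cc)*(y-c)" by (simp add: algebra_simps)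
  have "(c+cc)/((x+c)*(cc+y)) + (x-cc)*(y-c)/((x+c)*(cc+y)*(x+y))
      = ((c+cc)*(x+y) + (x-cc)*(y-c)) / ((x+c)*(cc+y)*(x+y))"
    using a1 a2 a3 by (simp add: add_divide_distrib)
  also have "\<dots> = ((x+c)*(cc+y)) / ((x+c)*(cc+y)*(x+y))" by (simp only: e)
  also have "\<dots> = 1/(x+y)" using a1 a2 a3 by simp
  finally show ?thesis by simp
qed

lemma decomp:
  assumes fin: "finite I" and aI: "a \<notin> I"
    and re: "\<forall>i\<in>insert a I. Re (\<beta> i) > 0"
  shows "QF (insert a I) (CG \<beta> G) v =
     (\<beta> a + cnj (\<beta> a)) * QF (insert a I) G (\<lambda>i. v i / (cnj (\<beta> a) + \<beta> i))
     + QF I (CG \<beta> G) (\<lambda>i. v i * (\<beta> i - \<beta> a) / (cnj (\<beta> a) + \<beta> i))"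
proof -
  let ?c = "\<beta> a"
  let ?w = "\<lambda>i. v i / (cnj ?c + \<beta> i)"
  let ?w' = "\<lambda>i. v i * (\<beta> i - ?c) / (cnj ?c + \<beta> i)"
  let ?J = "insert a I"
  have trm: "cnj (v i) * v j * CG \<beta> G i j =
      (?c + cnj ?c) * (cnj (?w i) * ?w j * G i j) + cnj (?w' i) * ?w' j * CG \<beta> G i j"
    if i: "i \<in> ?J" and j: "j \<in> ?J" for i j
  proof -
    have ra: "Re ?c > 0" and ri: "Re (\<beta> i) > 0" and rj: "Re (\<beta> j) > 0" using re i j by auto
    have n1: "cnj (\<beta> i) + ?c \<noteq> 0" using re_pos_nz[OF ri ra] .
    have n2: "cnj ?c + \<beta> j \<noteq> 0" using re_pos_nz[OF ra rj] .
    have n3: "cnj (\<beta> i) + \<beta> j \<noteq> 0" using re_pos_nz[OF ri rj] .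
    have n1': "cnj ?c + \<beta> i \<noteq> 0" using n1
      by (metis complex_cnj_add complex_cnj_cnj complex_cnj_zero add.commute)
    have K: "1/(cnj (\<beta> i)+\<beta> j) = (?c+cnj ?c)/((cnj (\<beta> i)+?c)*(cnj ?c+\<beta> j))
        + (cnj (\<beta> i)-cnj ?c)*(\<beta> j-?c)/((cnj (\<beta> i)+?c)*(cnj ?c+\<beta> j)*(cnj (\<beta> i)+\<beta> j))"
      by (rule key_id[OF n1 n2 n3])
    have cw: "cnj (?w i) = cnj (v i) / (cnj (\<beta> i) + ?c)"
      by (simp add: add.commute)
    have cw': "cnj (?w' i) = cnj (v i) * (cnj (\<beta> i) - cnj ?c) / (cnj (\<beta> i) + ?c)"
      by (simp add: add.commute)
    have "cnj (v i) * v j * CG \<beta> G i j = cnj (v i) * v j * G i j * (1/(cnj (\<beta> i)+\<beta> j))"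
      by (simp add: CG_def)
    also have "\<dots> = (?c + cnj ?c) * (cnj (?w i) * ?w j * G i j) + cnj (?w' i) * ?w' j * CG \<beta> G i j"
      unfolding K cw cw' CG_def using n1 n2 n3 n1'
      by (simp add: field_simps)
    finally show ?thesis .
  qed
  have "QF ?J (CG \<beta> G) v = (\<Sum>i\<in>?J. \<Sum>j\<in>?J. (?c + cnj ?c) * (cnj (?w i) * ?w j * G i j) + cnj (?w' i) * ?w' j * CG \<beta> G i j)"
    unfolding QF_def by (intro sum.cong refl) (use trm in auto)
  also have "\<dots> = (?c + cnj ?c) * QF ?J G ?w + QF ?J (CG \<beta> G) ?w'"
    unfolding QF_def by (simp add: sum.distrib sum_distrib_left)
  also have "QF ?J (CG \<beta> G) ?w' = QF I (CG \<beta> G) ?w'"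
    unfolding QF_def using fin aI by (simp add: sum.insert)
  finally show ?thesis .
qed

lemma QF_insert_zero:
  assumes "finite I" "a \<notin> I"
  shows "QF (insert a I) G (w(a:=0)) = QF I G w"
proof -
  have "QF (insert a I) G (w(a:=0)) = QF I G (w(a:=0))"
    unfolding QF_def using assms by (simp add: sum.insert)
  also have "\<dots> = QF I G w" unfolding QF_def using assms(2)
    by (intro sum.cong refl) auto
  finally show ?thesis .
qed

lemma cnj_add_self_pos: "Re c > 0 \<Longrightarrow> c + cnj c = complex_of_real (2 * Re c)"
  by (simp add: complex_eq_iff)

lemma cauchy_psd:
  assumes "finite I"
  shows "inj_on \<beta> I \<longrightarrow> (\<forall>i\<in>I. Re (\<beta> i) > 0) \<longrightarrow> (\<forall>w. 0 \<le> QF I G w)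
         \<longrightarrow> (\<forall>v. 0 \<le> QF I (CG \<beta> G) v)"
  using assms
proof (induction I rule: finite_induct)
  case empty
  then show ?case by (simp add: QF_def)
next
  case (insert a I)
  show ?case
  proof (intro impI allI)
    fix v
    assume inj: "inj_on \<beta> (insert a I)" and re: "\<forall>i\<in>insert a I. Re (\<beta> i) > 0"
      and G: "\<forall>w. 0 \<le> QF (insert a I) G w"
    have GI: "\<forall>w. 0 \<le> QF I G w"
    proof
      fix w show "0 \<le> QF I G w" using G[rule_format, of "w(a:=0)"]
        QF_insert_zero[OF insert(1,2)] by simp
    qed
    have IH: "\<forall>v. 0 \<le> QF I (CG \<beta> G) v"
      using insert(3) inj re GI by (auto simp: inj_on_insert)
    have c: "0 \<le> \<beta> a + cnj (\<beta> a)"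
      using re by (simp add: less_eq_complex_def)
    show "0 \<le> QF (insert a I) (CG \<beta> G) v"
      unfolding decomp[OF insert(1,2) re]
      by (intro add_nonneg_nonneg mult_nonneg_nonneg c G[rule_format] IH[rule_format])
  qed
qed

definition ONE :: "nat \<Rightarrow> nat \<Rightarrow> complex" where "ONE i j = 1"

lemma QF_ONE: "QF I ONE w = cnj (\<Sum>i\<in>I. w i) * (\<Sum>i\<in>I. w i)"
  unfolding QF_def ONE_def by (simp add: sum_distrib_left sum_distrib_right mult.commute)

lemma cnj_mult_self_nonneg: "0 \<le> cnj (z::complex) * z"
proof -
  have "cnj z * z = complex_of_real ((Re z)\<^sup>2 + (Im z)\<^sup>2)"
    by (simp add: complex_mult_cnj mult.commute)
  then show ?thesis by (simp add: less_eq_complex_def)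
qed

lemma cnj_mult_self_zero: "cnj (z::complex) * z = 0 \<Longrightarrow> z = 0" by simp

lemma QF_ONE_nonneg: "0 \<le> QF I ONE w"
  unfolding QF_ONE by (rule cnj_mult_self_nonneg)

lemma cauchy_strict:
  assumes "finite I"
  shows "inj_on \<beta> I \<longrightarrow> (\<forall>i\<in>I. Re (\<beta> i) > 0) \<longrightarrow>
         (\<forall>v. QF I (CG \<beta> ONE) v = 0 \<longrightarrow> (\<forall>i\<in>I. v i = 0))"
  using assms
proof (induction I rule: finite_induct)
  case empty
  then show ?case by simp
next
  case (insert a I)
  show ?case
  proof (intro impI allI)
    fix v
    assume inj: "inj_on \<beta> (insert a I)" and re: "\<forall>i\<in>insert a I. Re (\<beta> i) > 0"
      and z: "QF (insert a I) (CG \<beta> ONE) v = 0"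
    let ?c = "\<beta> a"
    let ?w = "\<lambda>i. v i / (cnj ?c + \<beta> i)"
    let ?w' = "\<lambda>i. v i * (\<beta> i - ?c) / (cnj ?c + \<beta> i)"
    have IH: "\<forall>v. QF I (CG \<beta> ONE) v = 0 \<longrightarrow> (\<forall>i\<in>I. v i = 0)"
      using insert(3) inj re by (auto simp: inj_on_insert)
    have psdI: "0 \<le> QF I (CG \<beta> ONE) ?w'"
      using cauchy_psd[OF insert(1), of \<beta> ONE] inj re QF_ONE_nonneg by (auto simp: inj_on_insert)
    have c: "0 \<le> ?c + cnj ?c" using re by (simp add: less_eq_complex_def)
    have cnz: "?c + cnj ?c \<noteq> 0" using re by (simp add: complex_eq_iff)
    have t1: "0 \<le> (?c + cnj ?c) * QF (insert a I) ONE ?w"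
      by (intro mult_nonneg_nonneg c QF_ONE_nonneg)
    have sum0: "(?c + cnj ?c) * QF (insert a I) ONE ?w + QF I (CG \<beta> ONE) ?w' = 0"
      using z unfolding decomp[OF insert(1,2) re] .
    have A: "(?c + cnj ?c) * QF (insert a I) ONE ?w = 0" and B: "QF I (CG \<beta> ONE) ?w' = 0"
      using sum0 t1 psdI by (simp_all add: add_nonneg_eq_0_iff)
    have vI: "\<forall>i\<in>I. v i = 0"
    proof
      fix i assume i: "i \<in> I"
      have "?w' i = 0" using IH B i by blast
      moreover have "\<beta> i \<noteq> ?c" using inj i insert(2) by (auto simp: inj_on_def)
      moreover have "cnj ?c + \<beta> i \<noteq> 0" using re i re_pos_nz[of ?c "\<beta> i"] by auto
      ultimately show "v i = 0" by simp
    qed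
    have "QF (insert a I) ONE ?w = 0" using A cnz by simp
    then have "(\<Sum>i\<in>insert a I. ?w i) = 0" unfolding QF_ONE by (rule cnj_mult_self_zero)
    then have "?w a = 0" using vI insert(1,2) by (simp add: sum.insert)
    moreover have "cnj ?c + ?c \<noteq> 0" using cnz by (simp add: add.commute)
    ultimately have "v a = 0" by simp
    with vI show "\<forall>i\<in>insert a I. v i = 0" by simp
  qed
qed




lemma adj_dims[simp]: "dim_row (mat_adjoint A) = dim_col A" "dim_col (mat_adjoint A) = dim_row A"
  unfolding mat_adjoint_def by auto
lemma adj_index[simp]: "i < dim_col A \<Longrightarrow> j < dim_row A \<Longrightarrow> mat_adjoint A $$ (i,j) = conjugate (A $$ (j,i))"
  unfolding mat_adjoint_def by (auto simp: mat_of_rows_index)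

lemma minv_props:
  assumes M: "M \<in> carrier_mat n n" and d: "det M \<noteq> 0"
  shows "M * minv M = 1\<^sub>m n \<and> minv M * M = 1\<^sub>m n \<and> minv M \<in> carrier_mat n n"
proof -
  have U: "M \<in> Units (ring_mat TYPE(complex) n ())" by (rule det_non_zero_imp_unit[OF M d])
  have "mat_inverse M \<noteq> None" using mat_inverse(1)[OF M, where b="()"] U by blast
  then obtain B where B: "mat_inverse M = Some B" by auto
  then have "minv M = B" unfolding minv_def by simp
  with mat_inverse(2)[OF M B] show ?thesis by simp
qed

definition cvec :: "nat \<Rightarrow> complex mat \<Rightarrow> complex mat \<Rightarrow> (nat \<Rightarrow> complex) \<Rightarrow> nat \<Rightarrow> complex vec" where
  "cvec n A C \<alpha> i = minv (- mat_adjoint A + \<alpha> (Suc i) \<cdot>\<^sub>m 1\<^sub>m n) *\<^sub>v col (mat_adjoint C) 0"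

lemma V_carrier: "Vmat n A C \<alpha> k \<in> carrier_mat n k"
  unfolding Vmat_def by (rule carrier_matI) simp_all

lemma V_index: "p < n \<Longrightarrow> i < k \<Longrightarrow> Vmat n A C \<alpha> k $$ (p,i) = cvec n A C \<alpha> i $ p"
  unfolding Vmat_def cvec_def by (simp add: mat_of_cols_index)

definition gg :: "nat \<Rightarrow> complex mat \<Rightarrow> complex mat \<Rightarrow> complex mat \<Rightarrow> (nat \<Rightarrow> complex) \<Rightarrow> nat \<Rightarrow> nat \<Rightarrow> complex" where
  "gg n A C F \<alpha> i j = (\<Sum>q<n. (\<Sum>p<n. cnj (cvec n A C \<alpha> i $ p) * F $$ (p,q)) * cvec n A C \<alpha> j $ q)"

definition tt :: "nat \<Rightarrow> complex mat \<Rightarrow> complex mat \<Rightarrow> complex mat \<Rightarrow> (nat \<Rightarrow> complex) \<Rightarrow> nat \<Rightarrow> nat \<Rightarrow> complex" where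
  "tt n A C F \<alpha> i j = (1 + gg n A C F \<alpha> i j) / (cnj (\<alpha> (Suc i)) + \<alpha> (Suc j))"

lemma G_index:
  assumes F: "F \<in> carrier_mat n n" and i: "i < k" and j: "j < k"
  shows "(mat_adjoint (Vmat n A C \<alpha> k) * F * Vmat n A C \<alpha> k) $$ (i,j) = gg n A C F \<alpha> i j"
proof -
  have V: "Vmat n A C \<alpha> k \<in> carrier_mat n k" by (rule V_carrier)
  have "(mat_adjoint (Vmat n A C \<alpha> k) * F * Vmat n A C \<alpha> k) $$ (i,j)
     = (\<Sum>q<n. (mat_adjoint (Vmat n A C \<alpha> k) * F) $$ (i,q) * Vmat n A C \<alpha> k $$ (q,j))"
    using V F i j by (simp add: scalar_prod_def atLeast0LessThan)
  also have "\<dots> = gg n A C F \<alpha> i j"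
    unfolding gg_def
  proof (rule sum.cong[OF refl])
    fix q assume q: "q \<in> {..<n}"
    have "(mat_adjoint (Vmat n A C \<alpha> k) * F) $$ (i,q) = (\<Sum>p<n. cnj (cvec n A C \<alpha> i $ p) * F $$ (p,q))"
      using V F i q by (simp add: scalar_prod_def atLeast0LessThan V_index)
    then show "(mat_adjoint (Vmat n A C \<alpha> k) * F) $$ (i,q) * Vmat n A C \<alpha> k $$ (q,j) =
      (\<Sum>p<n. cnj (cvec n A C \<alpha> i $ p) * F $$ (p,q)) * cvec n A C \<alpha> j $ q"
      using q j by (simp add: V_index)
  qed
  finally show ?thesis .
qed

lemma T_carrier: "Tmat n A C F \<alpha> k \<in> carrier_mat k k"
  unfolding Tmat_def Let_def by simp

lemma T_index:
  assumes F: "F \<in> carrier_mat n n" and i: "i < k" and j: "j < k"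
  shows "Tmat n A C F \<alpha> k $$ (i,j) = tt n A C F \<alpha> i j"
  unfolding Tmat_def Let_def tt_def using G_index[OF F i j] i j by simp




lemma quad_swap:
  fixes a :: "nat \<Rightarrow> nat \<Rightarrow> complex"
  shows "(\<Sum>p\<in>P. \<Sum>q\<in>Q. (\<Sum>i\<in>I. a i p) * f p q * (\<Sum>j\<in>J. b j q)) =
         (\<Sum>i\<in>I. \<Sum>j\<in>J. \<Sum>q\<in>Q. \<Sum>p\<in>P. a i p * f p q * b j q)"
proof -
  have "(\<Sum>p\<in>P. \<Sum>q\<in>Q. (\<Sum>i\<in>I. a i p) * f p q * (\<Sum>j\<in>J. b j q))
      = (\<Sum>p\<in>P. \<Sum>q\<in>Q. \<Sum>j\<in>J. \<Sum>i\<in>I. a i p * f p q * b j q)"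
    by (simp add: sum_distrib_left sum_distrib_right)
  also have "\<dots> = (\<Sum>p\<in>P. \<Sum>q\<in>Q. \<Sum>i\<in>I. \<Sum>j\<in>J. a i p * f p q * b j q)"
    by (intro sum.cong refl, rule sum.swap)
  also have "\<dots> = (\<Sum>p\<in>P. \<Sum>i\<in>I. \<Sum>q\<in>Q. \<Sum>j\<in>J. a i p * f p q * b j q)"
    by (rule sum.cong[OF refl], rule sum.swap)
  also have "\<dots> = (\<Sum>i\<in>I. \<Sum>p\<in>P. \<Sum>q\<in>Q. \<Sum>j\<in>J. a i p * f p q * b j q)"
    by (rule sum.swap)
  also have "\<dots> = (\<Sum>i\<in>I. \<Sum>p\<in>P. \<Sum>j\<in>J. \<Sum>q\<in>Q. a i p * f p q * b j q)"
    by (intro sum.cong refl, rule sum.swap)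
  also have "\<dots> = (\<Sum>i\<in>I. \<Sum>j\<in>J. \<Sum>p\<in>P. \<Sum>q\<in>Q. a i p * f p q * b j q)"
    by (intro sum.cong refl, rule sum.swap)
  also have "\<dots> = (\<Sum>i\<in>I. \<Sum>j\<in>J. \<Sum>q\<in>Q. \<Sum>p\<in>P. a i p * f p q * b j q)"
    by (intro sum.cong refl, rule sum.swap)
  finally show ?thesis .
qed

lemma QF_gg_nonneg:
  assumes F: "F \<in> carrier_mat n n" and Fpsd: "psd_mat n F"
  shows "0 \<le> QF {0..<m} (gg n A C F \<alpha>) w"
proof -
  let ?c = "cvec n A C \<alpha>"
  define x where "x = vec n (\<lambda>q. \<Sum>j<m. w j * ?c j $ q)"
  have x: "x \<in> carrier_vec n" unfolding x_def by simp
  have "0 \<le> conjugate x \<bullet> (F *\<^sub>v x)" using Fpsd x unfolding psd_mat_def by blast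
  also have "conjugate x \<bullet> (F *\<^sub>v x) = (\<Sum>p<n. \<Sum>q<n. cnj (x $ p) * F $$ (p,q) * x $ q)"
    using F x by (simp add: scalar_prod_def atLeast0LessThan sum_distrib_left mult.assoc)
  also have "\<dots> = (\<Sum>p<n. \<Sum>q<n. (\<Sum>i<m. cnj (w i) * cnj (?c i $ p)) * F $$ (p,q) * (\<Sum>j<m. w j * ?c j $ q))"
    unfolding x_def by (intro sum.cong refl) simp
  also have "\<dots> = (\<Sum>i<m. \<Sum>j<m. \<Sum>q<n. \<Sum>p<n. cnj (w i) * cnj (?c i $ p) * F $$ (p,q) * (w j * ?c j $ q))"
    by (rule quad_swap)
  also have "\<dots> = QF {0..<m} (gg n A C F \<alpha>) w"
    unfolding QF_def gg_def atLeast0LessThan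
    by (simp add: sum_distrib_left sum_distrib_right mult.assoc mult.left_commute)
  finally show ?thesis .
qed




lemma QF_CG_add: "QF I (CG \<beta> (\<lambda>i j. G1 i j + G2 i j)) w = QF I (CG \<beta> G1) w + QF I (CG \<beta> G2) w"
  unfolding QF_def CG_def by (simp add: sum.distrib add_divide_distrib distrib_left)

lemma quad_mat: assumes M: "M \<in> carrier_mat m m" and v: "v \<in> carrier_vec m"
  shows "conjugate v \<bullet> (M *\<^sub>v v) = QF {0..<m} (\<lambda>i j. M $$ (i,j)) (\<lambda>i. v $ i)"
  using M v unfolding QF_def
  apply (simp add: scalar_prod_def sum_distrib_left)
  apply (intro sum.cong refl)
  apply (simp add: mult.commute mult.left_commute)
  done

locale setting =
  fixes n :: nat and A C F :: "complex mat" and \<alpha> :: "nat \<Rightarrow> complex"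
  assumes F: "F \<in> carrier_mat n n"
    and Fpsd: "psd_mat n F"
    and dist: "inj_on \<alpha> {1..}"
    and re: "\<And>j. j \<ge> 1 \<Longrightarrow> Re (\<alpha> j) > 0"
begin

abbreviation "t \<equiv> tt n A C F \<alpha>"
abbreviation "\<beta> \<equiv> (\<lambda>i. \<alpha> (Suc i))"

lemma t_CG: "t = CG \<beta> (\<lambda>i j. ONE i j + gg n A C F \<alpha> i j)"
  by (intro ext) (simp add: tt_def CG_def ONE_def)

lemma inj_beta: "inj_on \<beta> I"
  using dist unfolding inj_on_def by auto

lemma re_beta: "\<forall>i\<in>I. Re (\<beta> i) > 0" using re by auto

lemma t_psd: "0 \<le> QF {0..<m} t w"
proof -
  have a: "0 \<le> QF {0..<m} (CG \<beta> ONE) w"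
    by (rule cauchy_psd[of "{0..<m}" \<beta> ONE, rule_format]) (simp_all add: inj_beta re QF_ONE_nonneg)
  have b: "0 \<le> QF {0..<m} (CG \<beta> (gg n A C F \<alpha>)) w"
    by (rule cauchy_psd[of "{0..<m}" \<beta> "gg n A C F \<alpha>", rule_format]) (simp_all add: inj_beta re QF_gg_nonneg[OF F Fpsd])
  show ?thesis unfolding t_CG QF_CG_add using a b by simp
qed

lemma t_strict: "QF {0..<m} t w = 0 \<Longrightarrow> \<forall>i<m. w i = 0"
proof -
  assume z: "QF {0..<m} t w = 0"
  have a: "0 \<le> QF {0..<m} (CG \<beta> ONE) w"
    by (rule cauchy_psd[of "{0..<m}" \<beta> ONE, rule_format]) (simp_all add: inj_beta re QF_ONE_nonneg)
  have b: "0 \<le> QF {0..<m} (CG \<beta> (gg n A C F \<alpha>)) w"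
    by (rule cauchy_psd[of "{0..<m}" \<beta> "gg n A C F \<alpha>", rule_format]) (simp_all add: inj_beta re QF_gg_nonneg[OF F Fpsd])
  have "QF {0..<m} (CG \<beta> ONE) w = 0" using z a b unfolding t_CG QF_CG_add
    by (simp add: add_nonneg_eq_0_iff)
  then show ?thesis using cauchy_strict[of "{0..<m}" \<beta>] inj_beta re_beta by auto
qed

lemma T_quad: "v \<in> carrier_vec m \<Longrightarrow> conjugate v \<bullet> (Tmat n A C F \<alpha> m *\<^sub>v v) = QF {0..<m} t (\<lambda>i. v $ i)"
  unfolding quad_mat[OF T_carrier] QF_def by (intro sum.cong refl) (simp add: T_index[OF F])

lemma T_det: "det (Tmat n A C F \<alpha> m) \<noteq> 0"
proof
  assume "det (Tmat n A C F \<alpha> m) = 0"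
  then obtain v where v: "v \<in> carrier_vec m" "v \<noteq> 0\<^sub>v m" "Tmat n A C F \<alpha> m *\<^sub>v v = 0\<^sub>v m"
    using det_0_iff_vec_prod_zero_field[OF T_carrier] by blast
  have "conjugate v \<bullet> (Tmat n A C F \<alpha> m *\<^sub>v v) = 0" using v by simp
  then have "QF {0..<m} t (\<lambda>i. v $ i) = 0" using T_quad[OF v(1)] by simp
  then have "\<forall>i<m. v $ i = 0" by (rule t_strict)
  then have "v = 0\<^sub>v m" using v(1) by (intro eq_vecI) auto
  with v(2) show False by simp
qed

lemma Y_props: "Tmat n A C F \<alpha> m * minv (Tmat n A C F \<alpha> m) = 1\<^sub>m m \<and>
   minv (Tmat n A C F \<alpha> m) * Tmat n A C F \<alpha> m = 1\<^sub>m m \<and> minv (Tmat n A C F \<alpha> m) \<in> carrier_mat m m"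
  by (rule minv_props[OF T_carrier T_det])

lemma t_herm: "t j i = cnj (t i j)"
proof -
  have "gg n A C F \<alpha> j i = cnj (gg n A C F \<alpha> i j)"
  proof -
    have Fh: "\<And>p q. p < n \<Longrightarrow> q < n \<Longrightarrow> F $$ (q,p) = cnj (F $$ (p,q))"
    proof -
      fix p q assume "p < n" "q < n"
      have "mat_adjoint F = F" using Fpsd unfolding psd_mat_def hermitian_mat_def by auto
      then have "mat_adjoint F $$ (q,p) = F $$ (q,p)" by simp
      then show "F $$ (q,p) = cnj (F $$ (p,q))" using F \<open>p<n\<close> \<open>q<n\<close> by simp
    qed
    have "gg n A C F \<alpha> j i = (\<Sum>q<n. \<Sum>p<n. cnj (cvec n A C \<alpha> j $ p) * F $$ (p,q) * cvec n A C \<alpha> i $ q)"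
      unfolding gg_def by (simp add: sum_distrib_right)
    also have "\<dots> = (\<Sum>p<n. \<Sum>q<n. cnj (cvec n A C \<alpha> j $ p) * F $$ (p,q) * cvec n A C \<alpha> i $ q)"
      by (rule sum.swap)
    also have "\<dots> = (\<Sum>p<n. \<Sum>q<n. cnj (cnj (cvec n A C \<alpha> i $ q) * F $$ (q,p) * cvec n A C \<alpha> j $ p))"
    proof (rule sum.cong[OF refl], rule sum.cong[OF refl])
      fix p q assume "p \<in> {..<n}" "q \<in> {..<n}"
      then have e: "F $$ (q,p) = cnj (F $$ (p,q))" by (intro Fh) auto
      have "cnj (cnj (cvec n A C \<alpha> i $ q) * F $$ (q,p) * cvec n A C \<alpha> j $ p)
          = cvec n A C \<alpha> i $ q * F $$ (p,q) * cnj (cvec n A C \<alpha> j $ p)"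
        unfolding e by simp
      note h = this
      show "cnj (cvec n A C \<alpha> j $ p) * F $$ (p,q) * cvec n A C \<alpha> i $ q =
        cnj (cnj (cvec n A C \<alpha> i $ q) * F $$ (q,p) * cvec n A C \<alpha> j $ p)"
        unfolding h by (simp only: mult.commute mult.left_commute mult.assoc)
    qed
    also have "\<dots> = cnj (gg n A C F \<alpha> i j)"
      unfolding gg_def by (simp add: sum_distrib_right)
    finally show ?thesis .
  qed
  then show ?thesis unfolding tt_def by (simp add: add.commute)
qed

end



lemma mult_idx: assumes "A \<in> carrier_mat a b" "B \<in> carrier_mat b c" "i < a" "j < c"
  shows "(A * B) $$ (i,j) = (\<Sum>l<b. A $$ (i,l) * B $$ (l,j))"
  using assms by (simp add: scalar_prod_def atLeast0LessThan)

context setting begin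

abbreviation "Y m \<equiv> minv (Tmat n A C F \<alpha> m)"

lemma Y_carrier: "Y m \<in> carrier_mat m m" using Y_props by blast

lemma Y1: assumes i: "i < m" and j: "j < m"
  shows "(\<Sum>l<m. t i l * Y m $$ (l,j)) = (if i = j then 1 else 0)"
proof -
  have "(Tmat n A C F \<alpha> m * Y m) $$ (i,j) = 1\<^sub>m m $$ (i,j)" using Y_props by simp
  also have "(Tmat n A C F \<alpha> m * Y m) $$ (i,j) = (\<Sum>l<m. t i l * Y m $$ (l,j))"
    using mult_idx[OF T_carrier[of n A C F \<alpha> m] Y_carrier i j] i by (simp add: T_index[OF F])
  finally show ?thesis using i j by simp
qed

lemma Y2: assumes i: "i < m" and j: "j < m"
  shows "Y m $$ (i,j) = cnj (Y m $$ (j,i))"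
proof -
  define Z where "Z = mat m m (\<lambda>(i,j). cnj (Y m $$ (j,i)))"
  have Z: "Z \<in> carrier_mat m m" unfolding Z_def by simp
  have ZT: "Z * Tmat n A C F \<alpha> m = 1\<^sub>m m"
  proof (rule eq_matI)
    fix i j assume i: "i < dim_row (1\<^sub>m m :: complex mat)" and j: "j < dim_col (1\<^sub>m m :: complex mat)"
    then have i: "i < m" and j: "j < m" by auto
    have "(Z * Tmat n A C F \<alpha> m) $$ (i,j) = (\<Sum>l<m. cnj (Y m $$ (l,i)) * t l j)"
      using mult_idx[OF Z T_carrier[of n A C F \<alpha> m] i j] j i
      by (auto simp: T_index[OF F] Z_def intro!: sum.cong)
    also have "\<dots> = cnj (\<Sum>l<m. t j l * Y m $$ (l,i))"
      by (simp add: t_herm[of j] mult.commute)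
    also have "\<dots> = 1\<^sub>m m $$ (i,j)" using Y1[OF j i] i j by auto
    finally show "(Z * Tmat n A C F \<alpha> m) $$ (i,j) = 1\<^sub>m m $$ (i,j)" .
  qed (use Z T_carrier[of n A C F \<alpha> m] in auto)
  have "Z = Z * (Tmat n A C F \<alpha> m * Y m)" using Y_props Z by simp
  also have "\<dots> = (Z * Tmat n A C F \<alpha> m) * Y m"
    using assoc_mult_mat[OF Z T_carrier[of n A C F \<alpha> m] Y_carrier, symmetric] by simp
  also have "\<dots> = Y m" using ZT left_mult_one_mat[OF Y_carrier[of m]] by simp
  finally have "Z = Y m" .
  then have "Z $$ (i,j) = Y m $$ (i,j)" by simp
  then show ?thesis using i j unfolding Z_def by simp
qed

end



context setting begin

definition "yb m i = (\<Sum>l<m. Y m $$ (i,l) * t l m)"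
definition "uu m i = (if i < m then - yb m i else 1)"
definition "ss m = (\<Sum>l<Suc m. t m l * uu m l)"

lemma Tu_lt: assumes i: "i < m" shows "(\<Sum>l<Suc m. t i l * uu m l) = 0"
proof -
  have "(\<Sum>l<m. t i l * yb m l) = (\<Sum>l<m. \<Sum>r<m. t i l * Y m $$ (l,r) * t r m)"
    unfolding yb_def by (simp add: sum_distrib_left mult.assoc)
  also have "\<dots> = (\<Sum>r<m. \<Sum>l<m. t i l * Y m $$ (l,r) * t r m)" by (rule sum.swap)
  also have "\<dots> = (\<Sum>r<m. (\<Sum>l<m. t i l * Y m $$ (l,r)) * t r m)" by (simp add: sum_distrib_right)
  also have "\<dots> = (\<Sum>r<m. (if i = r then t r m else 0))"
    by (intro sum.cong refl) (simp add: Y1 i)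
  also have "\<dots> = t i m" using i by simp
  finally have e: "(\<Sum>l<m. t i l * yb m l) = t i m" .
  have "(\<Sum>l<Suc m. t i l * uu m l) = (\<Sum>l<m. t i l * uu m l) + t i m"
    by (simp add: uu_def)
  also have "(\<Sum>l<m. t i l * uu m l) = - (\<Sum>l<m. t i l * yb m l)"
    by (simp add: uu_def sum_negf[symmetric])
  finally show ?thesis using e by simp
qed

lemma QF_u: "QF {0..<Suc m} t (uu m) = ss m"
proof -
  have "QF {0..<Suc m} t (uu m) = (\<Sum>i<Suc m. cnj (uu m i) * (\<Sum>j<Suc m. t i j * uu m j))"
    unfolding QF_def atLeast0LessThan sum_distrib_left by (intro sum.cong refl) (simp add: ac_simps)
  also have "\<dots> = (\<Sum>i<m. cnj (uu m i) * (\<Sum>j<Suc m. t i j * uu m j)) + ss m"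
    by (simp add: ss_def uu_def)
  also have "(\<Sum>i<m. cnj (uu m i) * (\<Sum>j<Suc m. t i j * uu m j)) = 0"
    by (intro sum.neutral) (simp add: Tu_lt del: sum.lessThan_Suc)
  finally show ?thesis by simp
qed

lemma ss_pos: "0 \<le> ss m" "ss m \<noteq> 0"
proof -
  show "0 \<le> ss m" using t_psd[of "Suc m" "uu m"] QF_u by simp
  show "ss m \<noteq> 0"
  proof
    assume "ss m = 0"
    then have "QF {0..<Suc m} t (uu m) = 0" using QF_u by simp
    then have "\<forall>i<Suc m. uu m i = 0" by (rule t_strict)
    then have "uu m m = 0" by blast
    then show False by (simp add: uu_def)
  qed
qed

definition "Cand m = mat (Suc m) (Suc m) (\<lambda>(i,j). (if i < m \<and> j < m then Y m $$ (i,j) else 0) + uu m i * cnj (uu m j) / ss m)"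

lemma yb_cnj: assumes j: "j < m" shows "cnj (yb m j) = (\<Sum>l<m. t m l * Y m $$ (l,j))"
  unfolding yb_def cnj_sum
proof (intro sum.cong refl)
  fix l assume "l \<in> {..<m}"
  then have "Y m $$ (l,j) = cnj (Y m $$ (j,l))" using j by (intro Y2) auto
  then show "cnj (Y m $$ (j, l) * t l m) = t m l * Y m $$ (l, j)"
    by (simp add: t_herm[of m l] mult.commute)
qed

lemma T_Cand: "Tmat n A C F \<alpha> (Suc m) * Cand m = 1\<^sub>m (Suc m)"
proof (rule eq_matI)
  fix i j assume "i < dim_row (1\<^sub>m (Suc m) :: complex mat)" "j < dim_col (1\<^sub>m (Suc m) :: complex mat)"
  then have i: "i < Suc m" and j: "j < Suc m" by auto
  have C: "Cand m \<in> carrier_mat (Suc m) (Suc m)" unfolding Cand_def by simp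
  have "(Tmat n A C F \<alpha> (Suc m) * Cand m) $$ (i,j) = (\<Sum>l<Suc m. t i l * Cand m $$ (l,j))"
    using mult_idx[OF T_carrier[of n A C F \<alpha> "Suc m"] C i j] i by (simp add: T_index[OF F])
  also have "\<dots> = (\<Sum>l<Suc m. t i l * (if l < m \<and> j < m then Y m $$ (l,j) else 0))
       + (\<Sum>l<Suc m. t i l * (uu m l * cnj (uu m j) / ss m))"
  proof -
    have "(\<Sum>l<Suc m. t i l * Cand m $$ (l,j)) = (\<Sum>l<Suc m. t i l * (if l < m \<and> j < m then Y m $$ (l,j) else 0)
       + t i l * (uu m l * cnj (uu m j) / ss m))"
      by (intro sum.cong refl) (use j in \<open>simp add: Cand_def distrib_left\<close>)
    then show ?thesis by (simp only: sum.distrib)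
  qed
  also have "(\<Sum>l<Suc m. t i l * (uu m l * cnj (uu m j) / ss m)) = (\<Sum>l<Suc m. t i l * uu m l) * cnj (uu m j) / ss m"
    by (simp add: sum_distrib_right sum_divide_distrib mult.assoc del: sum.lessThan_Suc)
  also have "(\<Sum>l<Suc m. t i l * (if l < m \<and> j < m then Y m $$ (l,j) else 0))
       = (if j < m then (\<Sum>l<m. t i l * Y m $$ (l,j)) else 0)"
    by simp
  finally have e: "(Tmat n A C F \<alpha> (Suc m) * Cand m) $$ (i,j) =
     (if j < m then (\<Sum>l<m. t i l * Y m $$ (l,j)) else 0) + (\<Sum>l<Suc m. t i l * uu m l) * cnj (uu m j) / ss m" .
  show "(Tmat n A C F \<alpha> (Suc m) * Cand m) $$ (i,j) = 1\<^sub>m (Suc m) $$ (i,j)"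
  proof (cases "i < m")
    case True
    then show ?thesis unfolding e using i j by (simp add: Tu_lt Y1 del: sum.lessThan_Suc)
  next
    case False
    then have im: "i = m" using i by simp
    have sum_m: "(\<Sum>l<Suc m. t m l * uu m l) = ss m" by (simp add: ss_def)
    show ?thesis
    proof (cases "j < m")
      case True
      then show ?thesis unfolding e unfolding im sum_m using ss_pos(2)
        by (simp add: uu_def yb_cnj)
    next
      case False
      then have "j = m" using j by simp
      then show ?thesis unfolding e unfolding im sum_m using ss_pos(2) by (simp add: uu_def)
    qed
  qed
qed (use T_carrier[of n A C F \<alpha> "Suc m"] in \<open>simp_all add: Cand_def\<close>)

lemma minv_T: "minv (Tmat n A C F \<alpha> (Suc m)) = Cand m"
proof -
  have C: "Cand m \<in> carrier_mat (Suc m) (Suc m)" unfolding Cand_def by simp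
  have "minv (Tmat n A C F \<alpha> (Suc m)) = minv (Tmat n A C F \<alpha> (Suc m)) * (Tmat n A C F \<alpha> (Suc m) * Cand m)"
    unfolding T_Cand using Y_carrier[of "Suc m"] by simp
  also have "\<dots> = (minv (Tmat n A C F \<alpha> (Suc m)) * Tmat n A C F \<alpha> (Suc m)) * Cand m"
    using assoc_mult_mat[OF Y_carrier[of "Suc m"] T_carrier[of n A C F \<alpha> "Suc m"] C, symmetric] by simp
  also have "\<dots> = Cand m" using Y_props[of "Suc m"] C by simp
  finally show ?thesis .
qed

end



context setting begin

abbreviation "cc i p \<equiv> cvec n A C \<alpha> i $ p"

lemma VMV: assumes M: "M \<in> carrier_mat k k" and p: "p < n" and q: "q < n"
  shows "(Vmat n A C \<alpha> k * M * mat_adjoint (Vmat n A C \<alpha> k)) $$ (p,q) =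
     (\<Sum>j<k. \<Sum>i<k. cc i p * M $$ (i,j) * cnj (cc j q))"
proof -
  have V: "Vmat n A C \<alpha> k \<in> carrier_mat n k" by (rule V_carrier)
  have VM: "Vmat n A C \<alpha> k * M \<in> carrier_mat n k" using V M by simp
  have aV: "mat_adjoint (Vmat n A C \<alpha> k) \<in> carrier_mat k n" using V by (intro carrier_matI) auto
  have "(Vmat n A C \<alpha> k * M * mat_adjoint (Vmat n A C \<alpha> k)) $$ (p,q) =
     (\<Sum>j<k. (Vmat n A C \<alpha> k * M) $$ (p,j) * mat_adjoint (Vmat n A C \<alpha> k) $$ (j,q))"
    by (rule mult_idx[OF VM aV p q])
  also have "\<dots> = (\<Sum>j<k. (\<Sum>i<k. cc i p * M $$ (i,j)) * cnj (cc j q))"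
  proof (intro sum.cong refl)
    fix j assume j: "j \<in> {..<k}"
    have "(Vmat n A C \<alpha> k * M) $$ (p,j) = (\<Sum>i<k. cc i p * M $$ (i,j))"
      using mult_idx[OF V M p] j p by (auto simp: V_index intro!: sum.cong)
    moreover have "mat_adjoint (Vmat n A C \<alpha> k) $$ (j,q) = cnj (cc j q)"
      using V j q by (simp add: V_index)
    ultimately show "(Vmat n A C \<alpha> k * M) $$ (p,j) * mat_adjoint (Vmat n A C \<alpha> k) $$ (j,q) =
      (\<Sum>i<k. cc i p * M $$ (i,j)) * cnj (cc j q)" by simp
  qed
  also have "\<dots> = (\<Sum>j<k. \<Sum>i<k. cc i p * M $$ (i,j) * cnj (cc j q))"
    by (simp add: sum_distrib_right)
  finally show ?thesis .
qed

lemma X_carrier: "Xmat n A C F \<alpha> m \<in> carrier_mat n n"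
  unfolding Xmat_def Let_def using V_carrier[of n A C \<alpha> m] Y_carrier[of m]
  by (auto intro!: carrier_matI)

lemma X_idx: assumes p: "p < n" and q: "q < n"
  shows "Xmat n A C F \<alpha> m $$ (p,q) = (\<Sum>j<m. \<Sum>i<m. cc i p * Y m $$ (i,j) * cnj (cc j q))"
proof (cases "m = 0")
  case True
  then show ?thesis using p q by (simp add: Xmat_def)
next
  case False
  then show ?thesis unfolding Xmat_def Let_def using VMV[OF Y_carrier p q] by simp
qed

definition "rr m = sqrt (Re (ss m))"
definition "ll m i = uu m i / complex_of_real (rr m)"
definition "WW m p = (\<Sum>i<Suc m. cc i p * ll m i)"

lemma ss_real: "ss m = complex_of_real ((rr m)^2)" "rr m > 0"
proof -
  have "0 \<le> ss m" "ss m \<noteq> 0" by (rule ss_pos)+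
  then have im: "Im (ss m) = 0" and re: "Re (ss m) > 0"
    by (auto simp: less_eq_complex_def complex_eq_iff)
  show "ss m = complex_of_real ((rr m)^2)" unfolding rr_def using im re
    by (simp add: complex_eq_iff)
  show "rr m > 0" unfolding rr_def using re by simp
qed

lemma D_idx: assumes p: "p < n" and q: "q < n"
  shows "(Xmat n A C F \<alpha> (Suc m) - Xmat n A C F \<alpha> m) $$ (p,q) = WW m p * cnj (WW m q)"
proof -
  have C: "Cand m \<in> carrier_mat (Suc m) (Suc m)" unfolding Cand_def by simp
  have "Xmat n A C F \<alpha> (Suc m) $$ (p,q) = (\<Sum>j<Suc m. \<Sum>i<Suc m. cc i p * Cand m $$ (i,j) * cnj (cc j q))"
    unfolding Xmat_def Let_def minv_T using VMV[OF C p q] by simp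
  also have "\<dots> = (\<Sum>j<Suc m. \<Sum>i<Suc m. cc i p * (if i < m \<and> j < m then Y m $$ (i,j) else 0) * cnj (cc j q))
      + (\<Sum>j<Suc m. \<Sum>i<Suc m. cc i p * (uu m i * cnj (uu m j) / ss m) * cnj (cc j q))"
    unfolding sum.distrib[symmetric]
    by (intro sum.cong refl) (auto simp: Cand_def algebra_simps)
  also have "(\<Sum>j<Suc m. \<Sum>i<Suc m. cc i p * (if i < m \<and> j < m then Y m $$ (i,j) else 0) * cnj (cc j q))
      = Xmat n A C F \<alpha> m $$ (p,q)"
    unfolding X_idx[OF p q] by simp
  finally have e: "(Xmat n A C F \<alpha> (Suc m) - Xmat n A C F \<alpha> m) $$ (p,q) =
      (\<Sum>j<Suc m. \<Sum>i<Suc m. cc i p * (uu m i * cnj (uu m j) / ss m) * cnj (cc j q))"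
    using X_carrier[of "Suc m"] X_carrier[of m] p q by simp
  have "(\<Sum>j<Suc m. \<Sum>i<Suc m. cc i p * (uu m i * cnj (uu m j) / ss m) * cnj (cc j q))
     = (\<Sum>j<Suc m. \<Sum>i<Suc m. (cc i p * ll m i) * cnj (cc j q * ll m j))"
  proof (intro sum.cong refl)
    fix i j
    have r: "rr m > 0" by (rule ss_real(2))
    show "cc i p * (uu m i * cnj (uu m j) / ss m) * cnj (cc j q) = (cc i p * ll m i) * cnj (cc j q * ll m j)"
      unfolding ss_real(1) ll_def using r by (simp add: power2_eq_square field_simps)
  qed
  also have "\<dots> = WW m p * cnj (WW m q)"
    unfolding WW_def cnj_sum sum_product by (rule sum.swap)
  finally show ?thesis using e by simp
qed

end



lemma (in vec_space) non_distinct_low_rank':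
assumes "A \<in> carrier_mat n nc"
and "\<not> distinct (cols A)"
shows "rank A < nc"
proof -
  obtain S where "maximal S (\<lambda>T. T \<subseteq> set (cols A) \<and> lin_indpt T)"
    using maximal_exists[of "(\<lambda>T. T \<subseteq> set (cols A) \<and> lin_indpt T)" "card (set (cols A))" "{}"]
    by (meson List.finite_set card_mono empty_iff empty_subsetI finite_lin_indpt2 rev_finite_subset)
  then have "card S \<le> card (set (cols A))" by (simp add: card_mono maximal_def)
  then have "card S < nc"
    using assms(1) cols_length card_length \<open>\<not> distinct (cols A)\<close> card_distinct carrier_matD(2) nat_less_le
    by (metis dual_order.antisym dual_order.trans)
  then show ?thesis
    using rank_card_indpt[OF \<open>A \<in> carrier_mat n nc\<close> \<open>maximal S (\<lambda>T. T \<subseteq> set (cols A) \<and> lin_indpt T)\<close>]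
    by simp
qed

lemma (in vec_space) rank_ge1:
  assumes A: "A \<in> carrier_mat n nc" and c: "c < nc" and nz: "col A c \<noteq> 0\<^sub>v n"
  shows "rank A \<ge> 1"
proof -
  have cA: "col A c \<in> set (cols A)" using A c by (simp add: cols_def)
  have cv: "col A c \<in> carrier_vec n" using A c by simp
  have li0: "lin_indpt {}"
    by (metis (no_types) empty_subsetI fin_dim finite_basis_exists subset_li_is_li vec_vs vectorspace.basis_def)
  have "col A c \<notin> span {}" using nz span_empty by simp
  then have "\<not> lin_dep ({} \<union> {col A c})"
    using lin_dep_iff_in_span[of "{}" "col A c"] li0 cv by simp
  then have "lin_indpt {col A c}" by simp
  from rank_ge_card_indpt[OF A _ this] cA show ?thesis by simp
qed

theorem theorem6p2:
  fixes n :: nat and A C F :: "complex mat" and \<alpha> :: "nat \<Rightarrow> complex"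
  assumes A: "A \<in> carrier_mat n n"
    and C: "C \<in> carrier_mat 1 n"
    and F: "hermitian_mat n F"
    and Fpsd: "psd_mat n F"
    and dist: "inj_on \<alpha> {1..}"
    and re: "\<And>j. j \<ge> 1 \<Longrightarrow> Re (\<alpha> j) > 0"
    and nonsing: "\<And>j. j \<ge> 1 \<Longrightarrow> det (- mat_adjoint A + \<alpha> j \<cdot>\<^sub>m 1\<^sub>m n) \<noteq> 0"
    and k: "k \<ge> 1"
  shows "(\<exists>l \<in> carrier_vec k. l $ (k - 1) \<noteq> 0 \<and>
            Xmat n A C F \<alpha> k - Xmat n A C F \<alpha> (k - 1)
              = Vmat n A C \<alpha> k * (mat_of_cols k [l] * mat_adjoint (mat_of_cols k [l]))
                * mat_adjoint (Vmat n A C \<alpha> k))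
       \<and> vec_space.rank n (Xmat n A C F \<alpha> k - Xmat n A C F \<alpha> (k - 1)) \<le> 1
       \<and> (vec_space.rank n (Vmat n A C \<alpha> k) = k \<longrightarrow>
            vec_space.rank n (Xmat n A C F \<alpha> k - Xmat n A C F \<alpha> (k - 1)) = 1)
       \<and> psd_mat n (Xmat n A C F \<alpha> k - Xmat n A C F \<alpha> (k - 1))"
proof -
  have Fc: "F \<in> carrier_mat n n" using F unfolding hermitian_mat_def by blast
  interpret setting n A C F \<alpha> using Fc Fpsd dist re by unfold_locales auto
  interpret vs: vec_space "TYPE(complex)" n .
  obtain m where km: "k = Suc m" using k by (cases k) auto
  have k1: "k - 1 = m" using km by simp
  define D where "D = Xmat n A C F \<alpha> k - Xmat n A C F \<alpha> (k - 1)"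
  define V where "V = Vmat n A C \<alpha> k"
  define lv where "lv = vec k (ll m)"
  define L where "L = mat_of_cols k [lv]"
  have Dc: "D \<in> carrier_mat n n" unfolding D_def using X_carrier[of k] X_carrier[of "k-1"]
    by (intro carrier_matI) auto
  have Dix: "\<And>p q. p < n \<Longrightarrow> q < n \<Longrightarrow> D $$ (p,q) = WW m p * cnj (WW m q)"
    unfolding D_def k1 unfolding km by (rule D_idx)
  have Vc: "V \<in> carrier_mat n k" unfolding V_def by (rule V_carrier)
  have lvc: "lv \<in> carrier_vec k" unfolding lv_def by simp
  have r: "rr m > 0" by (rule ss_real(2))
  have lvlast: "lv $ (k - 1) \<noteq> 0" unfolding lv_def k1 using km r by (simp add: ll_def uu_def)
  have Lc: "L \<in> carrier_mat k 1" unfolding L_def by (intro carrier_matI) auto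
  have LL: "L * mat_adjoint L \<in> carrier_mat k k" using Lc by (intro carrier_matI) auto
  have LLix: "(L * mat_adjoint L) $$ (i,j) = ll m i * cnj (ll m j)" if "i < k" "j < k" for i j
  proof -
    have aL: "mat_adjoint L \<in> carrier_mat 1 k" using Lc by (intro carrier_matI) auto
    show ?thesis using mult_idx[OF Lc aL that] that Lc unfolding L_def lv_def
      by (simp add: mat_of_cols_index)
  qed
  have R: "D = V * (L * mat_adjoint L) * mat_adjoint V"
  proof (rule eq_matI)
    fix p q assume "p < dim_row (V * (L * mat_adjoint L) * mat_adjoint V)" "q < dim_col (V * (L * mat_adjoint L) * mat_adjoint V)"
    then have p: "p < n" and q: "q < n" using Vc by auto
    have "(V * (L * mat_adjoint L) * mat_adjoint V) $$ (p,q) =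
       (\<Sum>j<k. \<Sum>i<k. cc i p * (L * mat_adjoint L) $$ (i,j) * cnj (cc j q))"
      unfolding V_def by (rule VMV[OF LL p q])
    also have "\<dots> = (\<Sum>j<k. \<Sum>i<k. (cc i p * ll m i) * cnj (cc j q * ll m j))"
      by (intro sum.cong refl) (simp add: LLix ac_simps)
    also have "\<dots> = WW m p * cnj (WW m q)"
      unfolding WW_def cnj_sum sum_product km by (rule sum.swap)
    finally show "D $$ (p,q) = (V * (L * mat_adjoint L) * mat_adjoint V) $$ (p,q)" using Dix p q by simp
  qed (use Dc Vc in auto)
  have ex: "\<exists>l \<in> carrier_vec k. l $ (k - 1) \<noteq> 0 \<and> D = V * (mat_of_cols k [l] * mat_adjoint (mat_of_cols k [l])) * mat_adjoint V"
    using lvc lvlast R unfolding L_def by blast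
  have rk1: "vs.rank D \<le> 1"
    by (rule vs.rank_le_1_product_entries[OF Dc, of "WW m" "\<lambda>q. cnj (WW m q)"]) (use Dc Dix in auto)
  have Vlv: "(V *\<^sub>v lv) $ p = WW m p" if p: "p < n" for p
  proof -
    have "(V *\<^sub>v lv) $ p = (\<Sum>i<k. V $$ (p,i) * ll m i)"
      using Vc p unfolding lv_def by (auto simp: scalar_prod_def atLeast0LessThan intro!: sum.cong)
    also have "\<dots> = (\<Sum>i<k. cc i p * ll m i)"
      using p unfolding V_def by (intro sum.cong refl) (simp add: V_index)
    finally show ?thesis unfolding WW_def km .
  qed
  have rkV: "vs.rank D = 1" if rv: "vs.rank V = k"
  proof -
    have "\<exists>p<n. WW m p \<noteq> 0"
    proof (rule ccontr)
      assume "\<not> (\<exists>p<n. WW m p \<noteq> 0)"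
      then have z: "V *\<^sub>v lv = 0\<^sub>v n" using Vlv Vc by (intro eq_vecI) auto
      have lnz: "lv \<noteq> 0\<^sub>v k" using lvlast km by auto
      show False
      proof (cases "distinct (cols V)")
        case True
        then have "vs.lin_indpt (set (cols V))" using vs.full_rank_lin_indpt[OF Vc rv] by simp
        moreover have "vs.lin_dep (set (cols V))" by (rule vs.lin_depI[OF Vc lvc lnz z True])
        ultimately show False by simp
      next
        case False
        then show False using vs.non_distinct_low_rank'[OF Vc] rv by simp
      qed
    qed
    then obtain p where p: "p < n" "WW m p \<noteq> 0" by blast
    have "col D p $ p \<noteq> 0" using Dc p Dix by simp
    then have "col D p \<noteq> 0\<^sub>v n"
    proof (intro notI)
      assume "col D p $ p \<noteq> 0" "col D p = 0\<^sub>v n"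
      then show False using p by simp
    qed
    then have "vs.rank D \<ge> 1" by (rule vs.rank_ge1[OF Dc p(1)])
    then show ?thesis using rk1 by simp
  qed
  have psd: "psd_mat n D"
    unfolding psd_mat_def hermitian_mat_def
  proof (intro conjI ballI)
    show "D \<in> carrier_mat n n" by (rule Dc)
    show "mat_adjoint D = D"
      by (rule eq_matI) (use Dc Dix in auto)
    fix x :: "complex vec" assume x: "x \<in> carrier_vec n"
    have "conjugate x \<bullet> (D *\<^sub>v x) = QF {0..<n} (\<lambda>i j. D $$ (i,j)) (\<lambda>i. x $ i)"
      by (rule quad_mat[OF Dc x])
    also have "\<dots> = (\<Sum>i<n. \<Sum>j<n. (cnj (x $ i) * WW m i) * cnj (cnj (x $ j) * WW m j))"
      unfolding QF_def atLeast0LessThan by (intro sum.cong refl) (simp add: Dix)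
    also have "\<dots> = (\<Sum>i<n. cnj (x $ i) * WW m i) * cnj (\<Sum>j<n. cnj (x $ j) * WW m j)"
      by (simp add: sum_product cnj_sum)
    finally show "0 \<le> conjugate x \<bullet> (D *\<^sub>v x)"
      using cnj_mult_self_nonneg[of "cnj (\<Sum>j<n. cnj (x $ j) * WW m j)"] by (simp add: mult.commute)
  qed
  show ?thesis using ex rk1 rkV psd unfolding D_def V_def by blast
qed



end
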